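(* Let $(V,P)$ be a finite, connected, lazy, reversible Markov chain equipped with the combinatorial distance $d$, and let $x\sim y$. The following are equivalent: (i) the edge $(x,y)$ has non-negative Ollivier sectional curvature; (ii) for all $f$ with $|f(u)-f(v)|\le d(u,v)$ for all $u,v$ and $f(y)-f(x)=1$, and all $\lambda\ge0$, \[ \frac{\Delta e^{\lambda f}(x)}{e^{\lambda f(x)}}\ge\frac{\Delta e^{\lambda f}(y)}{e^{\lambda f(y)}}\quad\text{and}\quad \frac{\Delta e^{-\lambda f}(x)}{e^{-\lambda f(x)}}\le\frac{\Delta e^{-\lambda f}(y)}{e^{-\lambda f(y)}}. \]
   Context: Lazy means $\sum_yP(x,y)=1$ and $P(x,x)\ge\frac12$ for all $x$; $P$ has symmetric support, and there is a probability $m$ with $m(x)P(x,y)=m(y)P(y,x)$. $x\sim y$ means $x\ne y$ and $P(x,y)>0$; the combinatorial distance is the minimal number of edges on a path. $\Delta f(x)=\sum_zP(x,z)(f(z)-f(x))$. The edge $x\sim y$ has non-negative Ollivier sectional curvature if there is a coupling $\pi:V\times V\to[0,\infty)$ of $P(x,\cdot)$ and $P(y,\cdot)$ (i.e. $\sum_{y'}\pi(x',y')=P(x,x')$, $\sum_{x'}\pi(x',y')=P(y,y')$) with $d(x',y')\le1$ whenever $\pi(x',y')>0$. *)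

theory Defs
  imports "HOL-Analysis.Analysis"
begin

definition lazy_reversible_chain :: "'a set \<Rightarrow> ('a \<Rightarrow> 'a \<Rightarrow> real) \<Rightarrow> bool" where
  "lazy_reversible_chain V P \<longleftrightarrow>
     finite V \<and> V \<noteq> {} \<and>
     (\<forall>x y. P x y \<ge> 0) \<and>
     (\<forall>x y. (x \<notin> V \<or> y \<notin> V) \<longrightarrow> P x y = 0) \<and>
     (\<forall>x\<in>V. (\<Sum>y\<in>V. P x y) = 1) \<and>
     (\<forall>x\<in>V. P x x \<ge> 1/2) \<and>
     (\<forall>x\<in>V. \<forall>y\<in>V. P x y > 0 \<longleftrightarrow> P y x > 0) \<and>
     (\<exists>m :: 'a \<Rightarrow> real. (\<forall>x\<in>V. m x \<ge> 0) \<and> (\<Sum>x\<in>V. m x) = 1 \<and>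
        (\<forall>x\<in>V. \<forall>y\<in>V. m x * P x y = m y * P y x))"

definition adj :: "'a set \<Rightarrow> ('a \<Rightarrow> 'a \<Rightarrow> real) \<Rightarrow> 'a \<Rightarrow> 'a \<Rightarrow> bool" where
  "adj V P x y \<longleftrightarrow> x \<in> V \<and> y \<in> V \<and> x \<noteq> y \<and> P x y > 0"

inductive has_path :: "'a set \<Rightarrow> ('a \<Rightarrow> 'a \<Rightarrow> real) \<Rightarrow> 'a \<Rightarrow> 'a \<Rightarrow> nat \<Rightarrow> bool"
  for V P where
  path_nil: "x \<in> V \<Longrightarrow> has_path V P x x 0"
| path_cons: "adj V P x z \<Longrightarrow> has_path V P z y n \<Longrightarrow> has_path V P x y (Suc n)"

definition chain_connected :: "'a set \<Rightarrow> ('a \<Rightarrow> 'a \<Rightarrow> real) \<Rightarrow> bool" where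
  "chain_connected V P \<longleftrightarrow> (\<forall>x\<in>V. \<forall>y\<in>V. \<exists>n. has_path V P x y n)"

definition comb_dist :: "'a set \<Rightarrow> ('a \<Rightarrow> 'a \<Rightarrow> real) \<Rightarrow> 'a \<Rightarrow> 'a \<Rightarrow> nat" where
  "comb_dist V P x y = (LEAST n. has_path V P x y n)"

definition laplacian :: "'a set \<Rightarrow> ('a \<Rightarrow> 'a \<Rightarrow> real) \<Rightarrow> ('a \<Rightarrow> real) \<Rightarrow> 'a \<Rightarrow> real" where
  "laplacian V P f x = (\<Sum>z\<in>V. P x z * (f z - f x))"

definition nonneg_sectional_curvature :: "'a set \<Rightarrow> ('a \<Rightarrow> 'a \<Rightarrow> real) \<Rightarrow> 'a \<Rightarrow> 'a \<Rightarrow> bool" where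
  "nonneg_sectional_curvature V P x y \<longleftrightarrow>
     (\<exists>\<pi> :: 'a \<Rightarrow> 'a \<Rightarrow> real.
        (\<forall>x' y'. \<pi> x' y' \<ge> 0) \<and>
        (\<forall>x' y'. (x' \<notin> V \<or> y' \<notin> V) \<longrightarrow> \<pi> x' y' = 0) \<and>
        (\<forall>x'\<in>V. (\<Sum>y'\<in>V. \<pi> x' y') = P x x') \<and>
        (\<forall>y'\<in>V. (\<Sum>x'\<in>V. \<pi> x' y') = P y y') \<and>
        (\<forall>x'\<in>V. \<forall>y'\<in>V. \<pi> x' y' > 0 \<longrightarrow> comb_dist V P x' y' \<le> 1))"

end

theory Submission
  imports Defs
begin


lemma cont_coord2: "continuous_on UNIV (\<lambda>\<pi>::'a\<Rightarrow>'b\<Rightarrow>real. \<pi> a b)"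
proof -
  have "continuous_on UNIV (\<lambda>\<pi>::'a\<Rightarrow>'b\<Rightarrow>real. \<pi> a)" by simp
  moreover have "continuous_on UNIV (\<lambda>g::'b\<Rightarrow>real. g b)" by simp
  ultimately show ?thesis using continuous_on_compose2[of UNIV "\<lambda>g::'b\<Rightarrow>real. g b" UNIV "\<lambda>\<pi>::'a\<Rightarrow>'b\<Rightarrow>real. \<pi> a"]
    by auto
qed

lemma compact_box2: "compact (Pi\<^sub>E UNIV (\<lambda>a::'a. Pi\<^sub>E UNIV (\<lambda>b::'b. {0..(M::real)})))"
proof -
  have c1: "compact (Pi\<^sub>E UNIV (\<lambda>b::'b. {0..(M::real)}))"
    using compactin_PiE[of "\<lambda>i. euclidean" UNIV "\<lambda>b::'b. {0..M}"]
    by (simp add: euclidean_product_topology compactin_euclidean_iff)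
  show ?thesis
    using compactin_PiE[of "\<lambda>i. euclidean" UNIV "\<lambda>a::'a. Pi\<^sub>E UNIV (\<lambda>b::'b. {0..(M::real)})"] c1
    by (simp add: euclidean_product_topology compactin_euclidean_iff)
qed

lemma closed_K:
  fixes V :: "'a set" and mu :: "'a \<Rightarrow> real" and R :: "'a \<Rightarrow> 'a \<Rightarrow> bool"
  shows "closed {\<pi>::'a\<Rightarrow>'a\<Rightarrow>real. (\<forall>a b. \<pi> a b \<ge> 0) \<and> (\<forall>a b. \<not>(a\<in>V \<and> b\<in>V \<and> R a b) \<longrightarrow> \<pi> a b = 0) \<and> (\<forall>a\<in>V. sum (\<pi> a) V = mu a)}"
proof -
  have c: "continuous_on UNIV (\<lambda>\<pi>::'a\<Rightarrow>'a\<Rightarrow>real. \<pi> a b)" for a b by (rule cont_coord2)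
  have 1: "closed {\<pi>::'a\<Rightarrow>'a\<Rightarrow>real. \<forall>a b. \<pi> a b \<ge> 0}"
    apply (intro closed_Collect_all)
    using closed_Collect_le[OF continuous_on_const c] by auto
  have 2: "closed {\<pi>::'a\<Rightarrow>'a\<Rightarrow>real. \<forall>a b. \<not>(a\<in>V \<and> b\<in>V \<and> R a b) \<longrightarrow> \<pi> a b = 0}"
  proof (intro closed_Collect_all)
    fix a b
    show "closed {\<pi>::'a\<Rightarrow>'a\<Rightarrow>real. \<not>(a\<in>V \<and> b\<in>V \<and> R a b) \<longrightarrow> \<pi> a b = 0}"
      using closed_Collect_eq[OF c continuous_on_const, of a b 0]
      by (cases "a\<in>V \<and> b\<in>V \<and> R a b") auto
  qed
  have 3: "closed {\<pi>::'a\<Rightarrow>'a\<Rightarrow>real. \<forall>a. a\<in>V \<longrightarrow> sum (\<pi> a) V = mu a}"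
  proof (intro closed_Collect_all)
    fix a
    have cs: "continuous_on UNIV (\<lambda>\<pi>::'a\<Rightarrow>'a\<Rightarrow>real. sum (\<pi> a) V)"
      by (intro continuous_on_sum) (rule c)
    show "closed {\<pi>::'a\<Rightarrow>'a\<Rightarrow>real. a \<in> V \<longrightarrow> sum (\<pi> a) V = mu a}"
      using closed_Collect_eq[OF cs continuous_on_const, of "mu a"]
      by (cases "a\<in>V") auto
  qed
  show ?thesis using closed_Collect_conj[OF 1 closed_Collect_conj[OF 2 3]] by (simp add: Ball_def)
qed

lemma hall_or:
  fixes V :: "'a set" and mu nu :: "'a \<Rightarrow> real" and R :: "'a \<Rightarrow> 'a \<Rightarrow> bool"
  assumes fin: "finite V" and mu0: "\<forall>u\<in>V. mu u \<ge> 0" and nu0: "\<forall>v\<in>V. nu v \<ge> 0"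
    and tot: "sum mu V = sum nu V" and rfl: "\<forall>u\<in>V. R u u"
  shows "(\<exists>\<pi>::'a\<Rightarrow>'a\<Rightarrow>real. (\<forall>a b. \<pi> a b \<ge> 0) \<and> (\<forall>a b. (a \<notin> V \<or> b \<notin> V) \<longrightarrow> \<pi> a b = 0)
            \<and> (\<forall>a\<in>V. (\<Sum>b\<in>V. \<pi> a b) = mu a) \<and> (\<forall>b\<in>V. (\<Sum>a\<in>V. \<pi> a b) = nu b)
            \<and> (\<forall>a\<in>V. \<forall>b\<in>V. \<pi> a b > 0 \<longrightarrow> R a b))
       \<or> (\<exists>A\<subseteq>V. sum mu A > sum nu {w\<in>V. \<exists>a\<in>A. R a w})"
proof -
  define K where "K = {\<pi>::'a\<Rightarrow>'a\<Rightarrow>real. (\<forall>a b. \<pi> a b \<ge> 0) \<and> (\<forall>a b. \<not>(a\<in>V \<and> b\<in>V \<and> R a b) \<longrightarrow> \<pi> a b = 0) \<and> (\<forall>a\<in>V. sum (\<pi> a) V = mu a)}"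
  define M where "M = sum mu V"
  have M0: "M \<ge> 0" unfolding M_def using mu0 by (simp add: sum_nonneg)
  have KB: "K \<subseteq> Pi\<^sub>E UNIV (\<lambda>a::'a. Pi\<^sub>E UNIV (\<lambda>b::'a. {0..M}))"
  proof
    fix \<pi> assume "\<pi> \<in> K"
    hence p0: "\<And>a b. \<pi> a b \<ge> 0" and pz: "\<And>a b. \<not>(a\<in>V \<and> b\<in>V \<and> R a b) \<Longrightarrow> \<pi> a b = 0"
      and ps: "\<And>a. a\<in>V \<Longrightarrow> sum (\<pi> a) V = mu a" unfolding K_def by auto
    have "\<pi> a b \<le> M" for a b
    proof (cases "a\<in>V \<and> b\<in>V \<and> R a b")
      case True
      have "\<pi> a b \<le> sum (\<pi> a) V" using True fin p0 by (intro member_le_sum) auto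
      also have "\<dots> = mu a" using ps True by auto
      also have "\<dots> \<le> M" unfolding M_def using True fin mu0 by (intro member_le_sum) auto
      finally show ?thesis .
    next
      case False thus ?thesis using pz M0 by auto
    qed
    thus "\<pi> \<in> Pi\<^sub>E UNIV (\<lambda>a::'a. Pi\<^sub>E UNIV (\<lambda>b::'a. {0..M}))" using p0 by auto
  qed
  have Kc: "compact K"
  proof -
    have "compact (Pi\<^sub>E UNIV (\<lambda>a::'a. Pi\<^sub>E UNIV (\<lambda>b::'a. {0..M})) \<inter> K)"
      by (rule compact_Int_closed[OF compact_box2]) (unfold K_def, rule closed_K)
    thus ?thesis using Int_absorb1[OF KB] by simp
  qed
  define dg where "dg = (\<lambda>a b::'a. if a = b \<and> a \<in> V then mu a else 0)"
  have dgK: "dg \<in> K" unfolding K_def dg_def using mu0 rfl fin by (auto simp: sum.delta)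
  define col where "col = (\<lambda>(\<pi>::'a\<Rightarrow>'a\<Rightarrow>real) b. (\<Sum>a\<in>V. \<pi> a b))"
  define g where "g = (\<lambda>\<pi> b. max (col \<pi> b - nu b) 0)"
  define F where "F = (\<lambda>\<pi>. (\<Sum>b\<in>V. (g \<pi> b)^2))"
  have Fc: "continuous_on UNIV F"
    unfolding F_def g_def col_def
    by (intro continuous_on_sum continuous_on_power continuous_on_max continuous_on_diff continuous_on_const cont_coord2)
  obtain \<pi>0 where p0K: "\<pi>0 \<in> K" and p0min: "\<And>\<pi>. \<pi> \<in> K \<Longrightarrow> F \<pi>0 \<le> F \<pi>"
    using continuous_attains_inf[OF Kc _ continuous_on_subset[OF Fc]] dgK by blast
  have p0: "\<And>a b. \<pi>0 a b \<ge> 0" and pz: "\<And>a b. \<not>(a\<in>V \<and> b\<in>V \<and> R a b) \<Longrightarrow> \<pi>0 a b = 0"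
      and ps: "\<And>a. a\<in>V \<Longrightarrow> sum (\<pi>0 a) V = mu a" using p0K unfolding K_def by auto
  have g0: "g \<pi> b \<ge> 0" for \<pi> b unfolding g_def by simp
  have colsum: "(\<Sum>b\<in>V. col \<pi>0 b) = sum nu V"
  proof -
    have "(\<Sum>b\<in>V. col \<pi>0 b) = (\<Sum>a\<in>V. \<Sum>b\<in>V. \<pi>0 a b)" unfolding col_def using sum.swap by auto
    also have "\<dots> = sum mu V" using ps by simp
    finally show ?thesis using tot by simp
  qed
  show ?thesis
  proof (cases "F \<pi>0 = 0")
    case True
    have "\<forall>b\<in>V. (g \<pi>0 b)^2 = 0" using True unfolding F_def
      using sum_nonneg_eq_0_iff[OF fin, of "\<lambda>b. (g \<pi>0 b)^2"] by simp
    hence cle: "\<forall>b\<in>V. col \<pi>0 b \<le> nu b" unfolding g_def by auto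
    have "(\<Sum>b\<in>V. nu b - col \<pi>0 b) = 0" using colsum by (simp add: sum_subtractf)
    hence "\<forall>b\<in>V. nu b - col \<pi>0 b = 0"
      using sum_nonneg_eq_0_iff[OF fin, of "\<lambda>b. nu b - col \<pi>0 b"] cle by simp
    hence "\<forall>b\<in>V. (\<Sum>a\<in>V. \<pi>0 a b) = nu b" unfolding col_def by simp
    moreover have "\<forall>a b. (a \<notin> V \<or> b \<notin> V) \<longrightarrow> \<pi>0 a b = 0" using pz by auto
    moreover have "\<forall>a\<in>V. \<forall>b\<in>V. \<pi>0 a b > 0 \<longrightarrow> R a b" using pz by (metis less_irrefl)
    moreover have "\<forall>a b. \<pi>0 a b \<ge> 0" using p0 by blast
    moreover have "\<forall>a\<in>V. (\<Sum>b\<in>V. \<pi>0 a b) = mu a" using ps by blast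
    ultimately show ?thesis by (intro disjI1 exI[of _ \<pi>0] conjI) assumption+
  next
    case False
    have "\<exists>b\<in>V. g \<pi>0 b \<noteq> 0"
    proof (rule ccontr)
      assume "\<not> (\<exists>b\<in>V. g \<pi>0 b \<noteq> 0)"
      hence "F \<pi>0 = 0" unfolding F_def by simp
      thus False using False by simp
    qed
    then obtain b0 where b0: "b0 \<in> V" "g \<pi>0 b0 \<noteq> 0" by blast
    define t where "t = Max (g \<pi>0 ` V)"
    have gle: "\<And>b. b \<in> V \<Longrightarrow> g \<pi>0 b \<le> t" unfolding t_def using fin by auto
    have tpos: "t > 0" using gle[OF b0(1)] b0(2) g0[of \<pi>0 b0] by linarith
    define T where "T = {b\<in>V. g \<pi>0 b = t}"
    have "t \<in> g \<pi>0 ` V" unfolding t_def using fin b0(1) by (intro Max_in) auto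
    then obtain bt where "bt \<in> V" "g \<pi>0 bt = t" by blast
    hence Tne: "T \<noteq> {}" unfolding T_def by blast
    have Tcol: "\<And>b. b \<in> T \<Longrightarrow> col \<pi>0 b = nu b + t"
      unfolding T_def g_def using tpos by (auto simp: max_def split: if_splits)
    have key: "w \<in> T" if aV: "a \<in> V" and bT: "b \<in> T" and pab: "\<pi>0 a b > 0" and wV: "w \<in> V" and Raw: "R a w" for a b w
    proof (rule ccontr)
      assume wT: "w \<notin> T"
      have gw: "g \<pi>0 w < t" using wT wV gle[OF wV] unfolding T_def by auto
      have bV: "b \<in> V" using bT unfolding T_def by auto
      have bw: "b \<noteq> w" using bT wT by auto
      define e where "e = min (\<pi>0 a b) ((t - g \<pi>0 w)/2)"
      have e0: "e > 0" unfolding e_def using pab gw by auto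
      have ele: "e \<le> \<pi>0 a b" "e \<le> (t - g \<pi>0 w)/2" unfolding e_def by (rule min.cobounded1, rule min.cobounded2)
      define d where "d = (\<lambda>c. if c = b then -e else if c = w then e else 0)"
      define \<pi>1 where "\<pi>1 = (\<lambda>a' c. \<pi>0 a' c + (if a' = a then d c else 0))"
      have dsum: "(\<Sum>c\<in>V. d c) = 0"
      proof -
        have "(\<Sum>c\<in>V. d c) = (\<Sum>c\<in>V. (if c = b then -e else 0) + (if c = w then e else 0))"
          unfolding d_def using bw by (intro sum.cong) auto
        also have "\<dots> = 0" using bV wV fin by (simp add: sum.distrib sum.delta)
        finally show ?thesis .
      qed
      have p1K: "\<pi>1 \<in> K"
      proof -
        have "\<pi>1 a' c \<ge> 0" for a' c
          unfolding \<pi>1_def d_def using p0[of a' c] p0[of a w] ele e0 by auto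
        moreover have "\<pi>1 a' c = 0" if "\<not>(a'\<in>V \<and> c\<in>V \<and> R a' c)" for a' c
        proof -
          have "a' = a \<Longrightarrow> c = b \<Longrightarrow> False" using that aV bV pz[of a b] pab by auto
          moreover have "a' = a \<Longrightarrow> c = w \<Longrightarrow> False" using that aV wV Raw by auto
          ultimately show ?thesis unfolding \<pi>1_def d_def using pz[OF that] by auto
        qed
        moreover have "sum (\<pi>1 a') V = mu a'" if "a' \<in> V" for a'
        proof -
          have "sum (\<pi>1 a') V = sum (\<pi>0 a') V + (\<Sum>c\<in>V. if a' = a then d c else 0)"
            unfolding \<pi>1_def by (simp add: sum.distrib)
          also have "\<dots> = sum (\<pi>0 a') V" using dsum by (cases "a' = a") auto
          finally show ?thesis using ps[OF that] by simp
        qed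
        ultimately show ?thesis unfolding K_def by blast
      qed
      have col1: "col \<pi>1 c = col \<pi>0 c + d c" for c
      proof -
        have "col \<pi>1 c = col \<pi>0 c + (\<Sum>a'\<in>V. if a' = a then d c else 0)"
          unfolding col_def \<pi>1_def by (simp add: sum.distrib)
        thus ?thesis using aV fin by (simp add: sum.delta)
      qed
      define D where "D = (\<lambda>c. (g \<pi>1 c)^2 - (g \<pi>0 c)^2)"
      have Dz: "c \<notin> {b, w} \<Longrightarrow> D c = 0" for c unfolding D_def g_def using col1[of c] by (simp add: d_def)
      have "F \<pi>1 - F \<pi>0 = (\<Sum>c\<in>V. D c)" unfolding F_def D_def by (simp add: sum_subtractf)
      also have "\<dots> = (\<Sum>c\<in>{b,w}. D c)"
        using Dz bV wV fin by (intro sum.mono_neutral_right) auto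
      also have "\<dots> = D b + D w" using bw by simp
      finally have FD: "F \<pi>1 - F \<pi>0 = D b + D w" .
      have gb: "g \<pi>0 b = t" using bT unfolding T_def by auto
      have Db: "D b = (t - e)^2 - t^2"
      proof -
        have "col \<pi>0 b - nu b = t" using Tcol[OF bT] by simp
        hence "g \<pi>1 b = t - e" unfolding g_def using col1[of b] ele gw g0[of \<pi>0 w] unfolding d_def by auto
        thus ?thesis unfolding D_def using gb by simp
      qed
      have Dw: "D w \<le> (g \<pi>0 w + e)^2 - (g \<pi>0 w)^2"
      proof -
        have "g \<pi>1 w \<le> g \<pi>0 w + e" unfolding g_def using col1[of w] bw e0 unfolding d_def by auto
        moreover have "g \<pi>1 w \<ge> 0" by (rule g0)
        ultimately have "(g \<pi>1 w)^2 \<le> (g \<pi>0 w + e)^2" by (intro power_mono) auto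
        thus ?thesis unfolding D_def by simp
      qed
      have "D b + D w \<le> 2*e*(e - (t - g \<pi>0 w))" using Db Dw by (simp add: power2_eq_square algebra_simps)
      also have "\<dots> < 0" using e0 ele gw by (intro mult_pos_neg) auto
      finally have "F \<pi>1 < F \<pi>0" using FD by simp
      thus False using p0min[OF p1K] by simp
    qed
    define A where "A = {a\<in>V. \<exists>b\<in>T. \<pi>0 a b > 0}"
    define N where "N = {w\<in>V. \<exists>a\<in>A. R a w}"
    have NT: "N \<subseteq> T" unfolding N_def A_def using key by blast
    have TV: "T \<subseteq> V" unfolding T_def by auto
    have AV: "A \<subseteq> V" unfolding A_def by auto
    have cA: "(\<Sum>a\<in>V. \<pi>0 a b) = (\<Sum>a\<in>A. \<pi>0 a b)" if bT: "b \<in> T" for b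
    proof (rule sum.mono_neutral_right[OF fin AV])
      show "\<forall>i\<in>V - A. \<pi>0 i b = 0"
      proof
        fix i assume "i \<in> V - A"
        hence "\<not> \<pi>0 i b > 0" using bT unfolding A_def by blast
        thus "\<pi>0 i b = 0" using p0[of i b] by linarith
      qed
    qed
    have "(\<Sum>b\<in>T. col \<pi>0 b) = (\<Sum>b\<in>T. \<Sum>a\<in>A. \<pi>0 a b)"
      unfolding col_def using cA by simp
    also have "\<dots> = (\<Sum>a\<in>A. \<Sum>b\<in>T. \<pi>0 a b)" by (rule sum.swap)
    also have "\<dots> \<le> (\<Sum>a\<in>A. \<Sum>b\<in>V. \<pi>0 a b)"
      using TV fin p0 by (intro sum_mono sum_mono2) auto
    also have "\<dots> = sum mu A" using ps AV by (intro sum.cong) auto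
    finally have c1: "(\<Sum>b\<in>T. col \<pi>0 b) \<le> sum mu A" .
    have "(\<Sum>b\<in>T. col \<pi>0 b) = sum nu T + real (card T) * t" using Tcol by (simp add: sum.distrib)
    moreover have "real (card T) > 0" using Tne TV fin by (simp add: card_gt_0_iff finite_subset)
    ultimately have c2: "(\<Sum>b\<in>T. col \<pi>0 b) > sum nu T" using tpos by simp
    have "sum nu N \<le> sum nu T" using NT TV fin nu0 by (intro sum_mono2) (auto intro: finite_subset)
    hence "sum mu A > sum nu N" using c1 c2 by linarith
    thus ?thesis unfolding N_def using AV by blast
  qed
qed


lemma hp_V: "has_path V P u v n \<Longrightarrow> u \<in> V \<and> v \<in> V"
  by (induction rule: has_path.induct) (auto simp: adj_def)

lemma cd_path:
  assumes "chain_connected V P" "u \<in> V" "v \<in> V"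
  shows "has_path V P u v (comb_dist V P u v)"
proof -
  obtain n where "has_path V P u v n" using assms unfolding chain_connected_def by blast
  thus ?thesis unfolding comb_dist_def by (rule LeastI)
qed

lemma cd_self: "u \<in> V \<Longrightarrow> comb_dist V P u u = 0"
  unfolding comb_dist_def by (rule Least_eq_0) (rule path_nil)

lemma cd_adj: "adj V P u v \<Longrightarrow> comb_dist V P u v \<le> 1"
proof -
  assume a: "adj V P u v"
  hence "v \<in> V" unfolding adj_def by auto
  hence "has_path V P u v (Suc 0)" using path_cons[OF a path_nil] by blast
  thus ?thesis unfolding comb_dist_def using Least_le[of "has_path V P u v" "Suc 0"] by simp
qed

lemma cd_le1_cases:
  assumes "chain_connected V P" "u \<in> V" "v \<in> V" "comb_dist V P u v \<le> 1"
  shows "u = v \<or> adj V P u v"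
proof -
  have hp: "has_path V P u v (comb_dist V P u v)" using cd_path assms by metis
  show ?thesis
  proof (cases "comb_dist V P u v = 0")
    case True
    then show ?thesis using hp by (auto elim: has_path.cases)
  next
    case False
    hence "comb_dist V P u v = Suc 0" using assms(4) by simp
    hence "has_path V P u v (Suc 0)" using hp by simp
    then obtain z where "adj V P u z" "has_path V P z v 0" by (cases rule: has_path.cases) auto
    moreover from this(2) have "z = v" by (cases rule: has_path.cases) auto
    ultimately show ?thesis by simp
  qed
qed

lemma chain_facts:
  assumes "lazy_reversible_chain V P"
  shows "finite V" "\<And>a b. P a b \<ge> 0" "\<And>a. a \<in> V \<Longrightarrow> (\<Sum>b\<in>V. P a b) = 1"
    "\<And>a. a \<in> V \<Longrightarrow> P a a \<ge> 1/2" "\<And>a b. a \<in> V \<Longrightarrow> b \<in> V \<Longrightarrow> P a b > 0 \<Longrightarrow> P b a > 0"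
  using assms unfolding lazy_reversible_chain_def by blast+

lemma adj_sym:
  assumes "lazy_reversible_chain V P" "adj V P u v" shows "adj V P v u"
proof -
  have "u \<in> V" "v \<in> V" "u \<noteq> v" "P u v > 0" using assms(2) unfolding adj_def by auto
  moreover have "P v u > 0" using chain_facts(5)[OF assms(1) calculation(1,2,4)] .
  ultimately show ?thesis unfolding adj_def by auto
qed

lemma cd_sym1:
  assumes "lazy_reversible_chain V P" "chain_connected V P" "u \<in> V" "v \<in> V" "comb_dist V P u v \<le> 1"
  shows "comb_dist V P v u \<le> 1"
proof -
  have "u = v \<or> adj V P u v" using cd_le1_cases[OF assms(2-5)] .
  thus ?thesis
  proof
    assume "u = v" thus ?thesis using cd_self[OF assms(4)] by simp
  next
    assume "adj V P u v" thus ?thesis by (rule cd_adj[OF adj_sym[OF assms(1)]])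
  qed
qed

lemma cd_supp:
  assumes "u \<in> V" "z \<in> V" "P u z > 0"
  shows "comb_dist V P u z \<le> 1"
proof (cases "u = z")
  case True thus ?thesis using cd_self[OF assms(1)] by simp
next
  case False thus ?thesis using assms by (intro cd_adj) (auto simp: adj_def)
qed

lemma cd_pos:
  assumes "chain_connected V P" "u \<in> V" "v \<in> V" "u \<noteq> v"
  shows "comb_dist V P u v \<ge> 1"
proof (rule ccontr)
  assume "\<not> comb_dist V P u v \<ge> 1"
  hence "comb_dist V P u v = 0" by simp
  hence "has_path V P u v 0" using cd_path[OF assms(1-3)] by simp
  thus False using assms(4) by (auto elim: has_path.cases)
qed

definition lev :: "'a set \<Rightarrow> ('a \<Rightarrow> 'a \<Rightarrow> real) \<Rightarrow> 'a set \<Rightarrow> 'a \<Rightarrow> real" where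
  "lev V P L z = (if z \<in> L then -1 else if (\<exists>l\<in>L. comb_dist V P l z \<le> 1) then 0 else 1)"

lemma lev_lip:
  assumes "lazy_reversible_chain V P" "chain_connected V P" "u \<in> V" "v \<in> V"
  shows "\<bar>lev V P L u - lev V P L v\<bar> \<le> real (comb_dist V P u v)"
proof (cases "comb_dist V P u v \<le> 1")
  case False
  hence "real (comb_dist V P u v) \<ge> 2" by simp
  moreover have "\<bar>lev V P L u - lev V P L v\<bar> \<le> 2" unfolding lev_def by auto
  ultimately show ?thesis by linarith
next
  case True
  show ?thesis
  proof (cases "u = v")
    case True thus ?thesis by simp
  next
    case False
    have c1: "comb_dist V P u v = 1" using True cd_pos[OF assms(2-4) False] by simp
    have c2: "comb_dist V P v u \<le> 1" using cd_sym1[OF assms True] .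
    have "\<bar>lev V P L u - lev V P L v\<bar> \<le> 1"
      unfolding lev_def using True c2 by (auto split: if_splits)
    thus ?thesis using c1 by simp
  qed
qed

lemma lap_exp:
  assumes "finite V" "(\<Sum>z\<in>V. P a z) = 1"
  shows "laplacian V P (\<lambda>z. exp (h z)) a / exp (h a) = (\<Sum>z\<in>V. P a z * exp (h z - h a)) - 1"
proof -
  have "laplacian V P (\<lambda>z. exp (h z)) a / exp (h a) = (\<Sum>z\<in>V. P a z * (exp (h z) - exp (h a)) / exp (h a))"
    unfolding laplacian_def by (simp add: sum_divide_distrib)
  also have "\<dots> = (\<Sum>z\<in>V. P a z * exp (h z - h a) - P a z)"
    by (intro sum.cong refl) (simp add: exp_diff field_simps)
  also have "\<dots> = (\<Sum>z\<in>V. P a z * exp (h z - h a)) - 1" using assms(2) by (simp add: sum_subtractf)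
  finally show ?thesis .
qed

lemma sum_lower:
  fixes p h :: "'a \<Rightarrow> real"
  assumes "finite V" "S \<subseteq> V" "\<forall>z\<in>V. 0 \<le> p z" "\<forall>z\<in>V. 0 \<le> h z" "\<forall>z\<in>S. h z = c"
  shows "c * sum p S \<le> (\<Sum>z\<in>V. p z * h z)"
proof -
  have "c * sum p S = (\<Sum>z\<in>S. p z * h z)" using assms(5) by (simp add: sum_distrib_left mult.commute)
  also have "\<dots> \<le> (\<Sum>z\<in>V. p z * h z)" using assms by (intro sum_mono2) auto
  finally show ?thesis .
qed

lemma sum_upper:
  fixes p h :: "'a \<Rightarrow> real"
  assumes "finite V" "N \<subseteq> V" "\<forall>z\<in>V. p z * h z \<le> (if z \<in> N then p z * c else 0) + p z"
  shows "(\<Sum>z\<in>V. p z * h z) \<le> c * sum p N + sum p V"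
proof -
  have "(\<Sum>z\<in>V. p z * h z) \<le> (\<Sum>z\<in>V. (if z \<in> N then p z * c else 0) + p z)"
    using assms(3) by (intro sum_mono) auto
  also have "\<dots> = (\<Sum>z\<in>V. if z \<in> N then p z * c else 0) + sum p V" by (simp add: sum.distrib)
  also have "(\<Sum>z\<in>V. if z \<in> N then p z * c else 0) = (\<Sum>z\<in>N. p z * c)"
    using assms(1,2) by (simp add: sum.inter_restrict[symmetric] Int_absorb1)
  also have "\<dots> = c * sum p N" by (simp add: sum_distrib_left mult.commute)
  finally show ?thesis .
qed

lemma tot_bound:
  assumes "lazy_reversible_chain V P" "b \<in> V" "S \<subseteq> V"
  shows "sum (P b) S \<le> 1"
proof -
  have "sum (P b) S \<le> sum (P b) V" using chain_facts[OF assms(1)] assms by (intro sum_mono2) auto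
  thus ?thesis using chain_facts(3)[OF assms(1,2)] by simp
qed

lemma half_bound:
  assumes "lazy_reversible_chain V P" "a \<in> V" "S \<subseteq> V" "a \<notin> S"
  shows "sum (P a) S \<le> 1/2"
proof -
  have fin: "finite V" using chain_facts[OF assms(1)] by simp
  have "sum (P a) S \<le> sum (P a) (V - {a})" using chain_facts[OF assms(1)] assms by (intro sum_mono2) auto
  also have "\<dots> = sum (P a) V - P a a" using fin assms(2) by (simp add: sum_diff1)
  finally show ?thesis using chain_facts(3,4)[OF assms(1,2)] by simp
qed

lemma mem_bound:
  assumes "lazy_reversible_chain V P" "a \<in> S" "S \<subseteq> V"
  shows "P b a \<le> sum (P b) S"
  using chain_facts[OF assms(1)] assms by (intro member_le_sum) (auto intro: finite_subset)

lemma exp_contra: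
  fixes d :: real
  assumes "d > 0" "exp (2/d) * d \<le> 1"
  shows False
proof -
  have "1 + 2/d \<le> exp (2/d)" by (rule exp_ge_add_one_self)
  hence "(1 + 2/d) * d \<le> exp (2/d) * d" using assms(1) by (intro mult_right_mono) auto
  moreover have "(1 + 2/d) * d = d + 2" using assms(1) by (simp add: field_simps)
  ultimately show False using assms by linarith
qed

lemma coupling_sum:
  fixes \<pi> :: "'a \<Rightarrow> 'a \<Rightarrow> real"
  assumes fin: "finite V" and p0: "\<forall>a b. \<pi> a b \<ge> 0"
    and r: "\<forall>a\<in>V. (\<Sum>b\<in>V. \<pi> a b) = mux a" and c: "\<forall>b\<in>V. (\<Sum>a\<in>V. \<pi> a b) = nuy b"
    and le: "\<forall>a\<in>V. \<forall>b\<in>V. \<pi> a b > 0 \<longrightarrow> G a \<le> H b"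
  shows "(\<Sum>a\<in>V. mux a * G a) \<le> (\<Sum>b\<in>V. nuy b * H b)"
proof -
  have "(\<Sum>a\<in>V. mux a * G a) = (\<Sum>a\<in>V. (\<Sum>b\<in>V. \<pi> a b) * G a)"
    using r by (intro sum.cong) auto
  also have "\<dots> = (\<Sum>a\<in>V. \<Sum>b\<in>V. \<pi> a b * G a)" by (simp add: sum_distrib_right)
  also have "\<dots> \<le> (\<Sum>a\<in>V. \<Sum>b\<in>V. \<pi> a b * H b)"
  proof (intro sum_mono)
    fix a b assume "a \<in> V" "b \<in> V"
    show "\<pi> a b * G a \<le> \<pi> a b * H b"
    proof (cases "\<pi> a b > 0")
      case True thus ?thesis using le \<open>a\<in>V\<close> \<open>b\<in>V\<close> by (intro mult_left_mono) auto
    next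
      case False hence "\<pi> a b = 0" using p0 by (metis order.not_eq_order_implies_strict)
      thus ?thesis by simp
    qed
  qed
  also have "\<dots> = (\<Sum>b\<in>V. \<Sum>a\<in>V. \<pi> a b * H b)" by (rule sum.swap)
  also have "\<dots> = (\<Sum>b\<in>V. (\<Sum>a\<in>V. \<pi> a b) * H b)" by (simp add: sum_distrib_right)
  also have "\<dots> = (\<Sum>b\<in>V. nuy b * H b)" using c by (intro sum.cong) auto
  finally show ?thesis .
qed

theorem theorem4p3:
  fixes V :: "'a set" and P :: "'a \<Rightarrow> 'a \<Rightarrow> real" and x y :: 'a
  assumes "lazy_reversible_chain V P"
    and "chain_connected V P"
    and "adj V P x y"
  shows "nonneg_sectional_curvature V P x y \<longleftrightarrow>
    (\<forall>f :: 'a \<Rightarrow> real. \<forall>t :: real.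
       ((\<forall>u\<in>V. \<forall>v\<in>V. \<bar>f u - f v\<bar> \<le> real (comb_dist V P u v)) \<and> f y - f x = 1 \<and> t \<ge> 0)
       \<longrightarrow> laplacian V P (\<lambda>z. exp (t * f z)) x / exp (t * f x)
             \<ge> laplacian V P (\<lambda>z. exp (t * f z)) y / exp (t * f y)
         \<and> laplacian V P (\<lambda>z. exp (- t * f z)) x / exp (- t * f x)
             \<le> laplacian V P (\<lambda>z. exp (- t * f z)) y / exp (- t * f y))"
  (is "?L \<longleftrightarrow> ?R")
proof -
  note ch = assms(1) and con = assms(2)
  have fin: "finite V" and P0: "\<And>a b. P a b \<ge> 0" and Ps: "\<And>a. a \<in> V \<Longrightarrow> (\<Sum>b\<in>V. P a b) = 1"
    and Pl: "\<And>a. a \<in> V \<Longrightarrow> P a a \<ge> 1/2" using chain_facts[OF ch] by auto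
  have xV: "x \<in> V" and yV: "y \<in> V" and xy: "x \<noteq> y" and Pxy: "P x y > 0" using assms(3) unfolding adj_def by auto
  have lx: "\<And>h. laplacian V P (\<lambda>z. exp (h z)) x / exp (h x) = (\<Sum>z\<in>V. P x z * exp (h z - h x)) - 1"
    using lap_exp[where V=V and P=P and a=x, OF fin Ps[OF xV]] .
  have ly: "\<And>h. laplacian V P (\<lambda>z. exp (h z)) y / exp (h y) = (\<Sum>z\<in>V. P y z * exp (h z - h y)) - 1"
    using lap_exp[where V=V and P=P and a=y, OF fin Ps[OF yV]] .
  show ?thesis
  proof
    assume ?L
    then obtain \<pi> :: "'a \<Rightarrow> 'a \<Rightarrow> real" where p0: "\<forall>a b. \<pi> a b \<ge> 0"
      and r: "\<forall>a\<in>V. (\<Sum>b\<in>V. \<pi> a b) = P x a" and c: "\<forall>b\<in>V. (\<Sum>a\<in>V. \<pi> a b) = P y b"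
      and s: "\<forall>a\<in>V. \<forall>b\<in>V. \<pi> a b > 0 \<longrightarrow> comb_dist V P a b \<le> 1"
      unfolding nonneg_sectional_curvature_def by blast
    show ?R
    proof (intro allI impI)
      fix f :: "'a \<Rightarrow> real" and t :: real
      assume "(\<forall>u\<in>V. \<forall>v\<in>V. \<bar>f u - f v\<bar> \<le> real (comb_dist V P u v)) \<and> f y - f x = 1 \<and> t \<ge> 0"
      hence lip: "\<forall>u\<in>V. \<forall>v\<in>V. \<bar>f u - f v\<bar> \<le> real (comb_dist V P u v)" and fxy: "f y - f x = 1" and t0: "t \<ge> 0"
        by auto
      have key: "f b - f y \<le> f a - f x" if "a \<in> V" "b \<in> V" "\<pi> a b > 0" for a b
      proof -
        have "comb_dist V P a b \<le> 1" using s that by auto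
        hence "real (comb_dist V P a b) \<le> 1" by simp
        moreover have "\<bar>f a - f b\<bar> \<le> real (comb_dist V P a b)" using lip that(1,2) by blast
        ultimately have "\<bar>f a - f b\<bar> \<le> 1" by linarith
        thus ?thesis using fxy by linarith
      qed
      have i1: "(\<Sum>z\<in>V. P y z * exp (t * f z - t * f y)) \<le> (\<Sum>z\<in>V. P x z * exp (t * f z - t * f x))"
      proof (rule coupling_sum[of V "\<lambda>a b. \<pi> b a"])
        show "finite V" by (rule fin)
        show "\<forall>a b. 0 \<le> \<pi> b a" using p0 by auto
        show "\<forall>a\<in>V. (\<Sum>b\<in>V. \<pi> b a) = P y a" using c by auto
        show "\<forall>b\<in>V. (\<Sum>a\<in>V. \<pi> b a) = P x b" using r by auto
        show "\<forall>a\<in>V. \<forall>b\<in>V. 0 < \<pi> b a \<longrightarrow> exp (t * f a - t * f y) \<le> exp (t * f b - t * f x)"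
        proof (intro ballI impI)
          fix a b assume "a \<in> V" "b \<in> V" "0 < \<pi> b a"
          hence "f a - f y \<le> f b - f x" using key by auto
          hence "t * (f a - f y) \<le> t * (f b - f x)" using t0 by (intro mult_left_mono)
          thus "exp (t * f a - t * f y) \<le> exp (t * f b - t * f x)" by (simp add: right_diff_distrib)
        qed
      qed
      have i2: "(\<Sum>z\<in>V. P x z * exp (- t * f z - - t * f x)) \<le> (\<Sum>z\<in>V. P y z * exp (- t * f z - - t * f y))"
      proof (rule coupling_sum[of V \<pi>])
        show "finite V" by (rule fin)
        show "\<forall>a b. 0 \<le> \<pi> a b" using p0 by auto
        show "\<forall>a\<in>V. (\<Sum>b\<in>V. \<pi> a b) = P x a" using r by auto
        show "\<forall>b\<in>V. (\<Sum>a\<in>V. \<pi> a b) = P y b" using c by auto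
        show "\<forall>a\<in>V. \<forall>b\<in>V. 0 < \<pi> a b \<longrightarrow> exp (- t * f a - - t * f x) \<le> exp (- t * f b - - t * f y)"
        proof (intro ballI impI)
          fix a b assume "a \<in> V" "b \<in> V" "0 < \<pi> a b"
          hence "f b - f y \<le> f a - f x" using key by auto
          hence "t * (f b - f y) \<le> t * (f a - f x)" using t0 by (intro mult_left_mono)
          thus "exp (- t * f a - - t * f x) \<le> exp (- t * f b - - t * f y)" by (simp add: algebra_simps)
        qed
      qed
      show "laplacian V P (\<lambda>z. exp (t * f z)) x / exp (t * f x)
             \<ge> laplacian V P (\<lambda>z. exp (t * f z)) y / exp (t * f y)
         \<and> laplacian V P (\<lambda>z. exp (- t * f z)) x / exp (- t * f x)
             \<le> laplacian V P (\<lambda>z. exp (- t * f z)) y / exp (- t * f y)"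
        using i1 i2 lx[of "\<lambda>z. t * f z"] ly[of "\<lambda>z. t * f z"] lx[of "\<lambda>z. - t * f z"] ly[of "\<lambda>z. - t * f z"]
        by simp
    qed
  next
    assume R: ?R
    show ?L
    proof (rule ccontr)
      assume nL: "\<not> ?L"
      have hall: "(\<exists>\<pi>::'a\<Rightarrow>'a\<Rightarrow>real. (\<forall>a b. \<pi> a b \<ge> 0) \<and> (\<forall>a b. (a \<notin> V \<or> b \<notin> V) \<longrightarrow> \<pi> a b = 0)
            \<and> (\<forall>a\<in>V. (\<Sum>b\<in>V. \<pi> a b) = P x a) \<and> (\<forall>b\<in>V. (\<Sum>a\<in>V. \<pi> a b) = P y b)
            \<and> (\<forall>a\<in>V. \<forall>b\<in>V. \<pi> a b > 0 \<longrightarrow> comb_dist V P a b \<le> 1))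
       \<or> (\<exists>A\<subseteq>V. sum (P x) A > sum (P y) {w\<in>V. \<exists>a\<in>A. comb_dist V P a w \<le> 1})"
        by (rule hall_or) (use fin P0 Ps xV yV in \<open>auto simp: cd_self\<close>)
      have "\<exists>A\<subseteq>V. sum (P x) A > sum (P y) {w\<in>V. \<exists>a\<in>A. comb_dist V P a w \<le> 1}"
        using hall
      proof (elim disjE)
        assume "\<exists>\<pi>::'a\<Rightarrow>'a\<Rightarrow>real. (\<forall>a b. \<pi> a b \<ge> 0) \<and> (\<forall>a b. (a \<notin> V \<or> b \<notin> V) \<longrightarrow> \<pi> a b = 0)
            \<and> (\<forall>a\<in>V. (\<Sum>b\<in>V. \<pi> a b) = P x a) \<and> (\<forall>b\<in>V. (\<Sum>a\<in>V. \<pi> a b) = P y b)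
            \<and> (\<forall>a\<in>V. \<forall>b\<in>V. \<pi> a b > 0 \<longrightarrow> comb_dist V P a b \<le> 1)"
        hence ?L unfolding nonneg_sectional_curvature_def .
        thus ?thesis using nL by contradiction
      qed
      then obtain A where AV: "A \<subseteq> V" and Av: "sum (P x) A > sum (P y) {w\<in>V. \<exists>a\<in>A. comb_dist V P a w \<le> 1}"
        by blast
      define NA where "NA = {w\<in>V. \<exists>a\<in>A. comb_dist V P a w \<le> 1}"
      have Av': "sum (P x) A > sum (P y) NA" using Av unfolding NA_def .
      have NAV: "NA \<subseteq> V" unfolding NA_def by auto
      have lip: "\<forall>u\<in>V. \<forall>v\<in>V. \<bar>lev V P L u - lev V P L v\<bar> \<le> real (comb_dist V P u v)" for L
        using lev_lip[OF ch con] by blast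
      show False
      proof (cases "x \<in> A")
        case False
        note xA = False
        show False
        proof (cases "\<exists>a\<in>A. comb_dist V P a y \<le> 1")
          case True
          hence "y \<in> NA" unfolding NA_def using yV by auto
          hence "P y y \<le> sum (P y) NA" using mem_bound[OF ch _ NAV] by blast
          moreover have "sum (P x) A \<le> 1/2" using half_bound[OF ch xV AV xA] .
          ultimately show False using Av' Pl[OF yV] by linarith
        next
          case False
          hence hA: "\<And>a. a \<in> A \<Longrightarrow> \<not> comb_dist V P a y \<le> 1" by blast
          define L where "L = {a\<in>A. P x a > 0}"
          define NL where "NL = {w\<in>V. \<exists>l\<in>L. comb_dist V P l w \<le> 1}"
          have LA: "L \<subseteq> A" unfolding L_def by auto
          have LV: "L \<subseteq> V" using LA AV by auto
          have NLV: "NL \<subseteq> V" unfolding NL_def by auto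
          have finA: "finite A" using AV fin finite_subset by auto
          have sL: "sum (P x) L = sum (P x) A"
          proof (rule sum.mono_neutral_left[OF finA LA])
            show "\<forall>i\<in>A - L. P x i = 0"
            proof
              fix i assume "i \<in> A - L"
              hence "\<not> P x i > 0" unfolding L_def by auto
              thus "P x i = 0" using P0[of x i] by linarith
            qed
          qed
          have "NL \<subseteq> NA" unfolding NL_def NA_def using LA by auto
          hence sNL: "sum (P y) NL \<le> sum (P y) NA" using P0 fin NAV by (intro sum_mono2) (auto intro: finite_subset)
          define d where "d = sum (P x) L - sum (P y) NL"
          have d0: "d > 0" unfolding d_def using sL sNL Av' by linarith
          have "sum (P y) NL \<ge> 0" using P0 by (simp add: sum_nonneg)
          hence "L \<noteq> {}" using d0 unfolding d_def by auto
          then obtain l where lL: "l \<in> L" by blast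
          have lV: "l \<in> V" and Pxl: "P x l > 0" using lL LV unfolding L_def by auto
          have "comb_dist V P x l \<le> 1" using cd_supp[where P=P, OF xV lV Pxl] .
          hence clx: "comb_dist V P l x \<le> 1" using cd_sym1[OF ch con xV lV] by blast
          have xL: "x \<notin> L" using xA LA by auto
          have fx: "lev V P L x = 0" unfolding lev_def using xL lL clx by auto
          have yL: "y \<notin> L" using hA[of y] LA cd_self[OF yV] by auto
          have fy: "lev V P L y = 1" unfolding lev_def using yL hA LA by auto
          define t where "t = 2 / d"
          have t0: "t \<ge> 0" unfolding t_def using d0 by simp
          have H: "laplacian V P (\<lambda>z. exp (- t * lev V P L z)) x / exp (- t * lev V P L x)
             \<le> laplacian V P (\<lambda>z. exp (- t * lev V P L z)) y / exp (- t * lev V P L y)"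
            using conjunct2[OF R[rule_format, of "lev V P L" t, OF conjI[OF lip conjI[OF _ t0]]]] fx fy by simp
          hence H': "(\<Sum>z\<in>V. P x z * exp (- t * lev V P L z - - t * lev V P L x))
              \<le> (\<Sum>z\<in>V. P y z * exp (- t * lev V P L z - - t * lev V P L y))"
            using lx[of "\<lambda>z. - t * lev V P L z"] ly[of "\<lambda>z. - t * lev V P L z"] by simp
          have low: "exp t * sum (P x) L \<le> (\<Sum>z\<in>V. P x z * exp (- t * lev V P L z - - t * lev V P L x))"
            by (rule sum_lower[OF fin LV]) (use P0 fx in \<open>auto simp: lev_def\<close>)
          have up: "(\<Sum>z\<in>V. P y z * exp (- t * lev V P L z - - t * lev V P L y)) \<le> exp t * sum (P y) NL + sum (P y) V"
          proof (rule sum_upper[OF fin NLV], intro ballI)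
            fix z assume zV: "z \<in> V"
            show "P y z * exp (- t * lev V P L z - - t * lev V P L y) \<le> (if z \<in> NL then P y z * exp t else 0) + P y z"
            proof (cases "P y z > 0")
              case False
              hence "P y z = 0" using P0[of y z] by linarith
              thus ?thesis by simp
            next
              case True
              have "comb_dist V P y z \<le> 1" using cd_supp[where P=P, OF yV zV True] .
              hence "comb_dist V P z y \<le> 1" using cd_sym1[OF ch con yV zV] by blast
              hence zL: "z \<notin> L" using hA LA by auto
              show ?thesis
              proof (cases "z \<in> NL")
                case True
                hence "lev V P L z = 0" unfolding lev_def NL_def using zL by auto
                thus ?thesis using True fy P0[of y z] by simp
              next
                case False
                hence "lev V P L z = 1" unfolding lev_def NL_def using zL zV by auto
                thus ?thesis using False fy by simp
              qed
            qed
          qed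
          have "exp t * d \<le> 1" using low up H' Ps[OF yV] unfolding d_def by (simp add: algebra_simps)
          thus False using exp_contra[OF d0] unfolding t_def by simp
        qed
      next
        case True
        note xA = True
        have yNA: "y \<in> NA" unfolding NA_def using yV xA cd_adj[OF assms(3)] by auto
        define B where "B = {v\<in>V. P y v > 0 \<and> v \<notin> NA}"
        define NB where "NB = {w\<in>V. \<exists>b\<in>B. comb_dist V P b w \<le> 1}"
        have BV: "B \<subseteq> V" unfolding B_def by auto
        have NBV: "NB \<subseteq> V" unfolding NB_def by auto
        have sB: "sum (P y) B = 1 - sum (P y) NA"
        proof -
          have "sum (P y) V = sum (P y) (V - NA) + sum (P y) NA" using NAV fin by (rule sum.subset_diff)
          moreover have "sum (P y) (V - NA) = sum (P y) B"
          proof (rule sum.mono_neutral_right)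
            show "finite (V - NA)" using fin by simp
            show "B \<subseteq> V - NA" unfolding B_def by auto
            show "\<forall>i\<in>V - NA - B. P y i = 0"
            proof
              fix i assume "i \<in> V - NA - B"
              hence "\<not> P y i > 0" unfolding B_def by auto
              thus "P y i = 0" using P0[of y i] by linarith
            qed
          qed
          ultimately show ?thesis using Ps[OF yV] by simp
        qed
        have disj: "NB \<inter> A = {}"
        proof (rule ccontr)
          assume "NB \<inter> A \<noteq> {}"
          then obtain a where aNB: "a \<in> NB" and aA: "a \<in> A" by blast
          then obtain b where bB: "b \<in> B" and cba: "comb_dist V P b a \<le> 1" unfolding NB_def by blast
          have "a \<in> V" "b \<in> V" using aA AV bB BV by auto
          hence "comb_dist V P a b \<le> 1" using cd_sym1[OF ch con] cba by blast
          hence "b \<in> NA" unfolding NA_def using aA \<open>b \<in> V\<close> by auto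
          thus False using bB unfolding B_def by auto
        qed
        have "sum (P x) NB + sum (P x) A = sum (P x) (NB \<union> A)"
          using disj fin NBV AV by (intro sum.union_disjoint[symmetric]) (auto intro: finite_subset)
        also have "\<dots> \<le> 1" using tot_bound[OF ch xV] NBV AV by auto
        finally have sNB: "sum (P x) NB + sum (P x) A \<le> 1" .
        define d where "d = sum (P y) B - sum (P x) NB"
        have d0: "d > 0" unfolding d_def using sB sNB Av' by linarith
        have yB: "y \<notin> B" using yNA unfolding B_def by auto
        show False
        proof (cases "\<exists>b\<in>B. comb_dist V P b x \<le> 1")
          case True
          hence "x \<in> NB" unfolding NB_def using xV by auto
          hence "P x x \<le> sum (P x) NB" using mem_bound[OF ch _ NBV] by blast
          moreover have "sum (P y) B \<le> 1/2" using half_bound[OF ch yV BV yB] .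
          ultimately show False using d0 Pl[OF xV] unfolding d_def by linarith
        next
          case False
          hence hB: "\<And>b. b \<in> B \<Longrightarrow> \<not> comb_dist V P b x \<le> 1" by blast
          have "sum (P x) NB \<ge> 0" using P0 by (simp add: sum_nonneg)
          hence "B \<noteq> {}" using d0 unfolding d_def by auto
          then obtain b where bB: "b \<in> B" by blast
          have bV: "b \<in> V" and Pyb: "P y b > 0" using bB unfolding B_def by auto
          have "comb_dist V P y b \<le> 1" using cd_supp[where P=P, OF yV bV Pyb] .
          hence cby: "comb_dist V P b y \<le> 1" using cd_sym1[OF ch con yV bV] by blast
          have xB: "x \<notin> B" using hB[of x] cd_self[OF xV] by auto
          have fx: "lev V P B x = 1" unfolding lev_def using xB hB by auto
          have fy: "lev V P B y = 0" unfolding lev_def using yB bB cby by auto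
          define f where "f = (\<lambda>z. 1 - lev V P B z)"
          have lipf: "\<forall>u\<in>V. \<forall>v\<in>V. \<bar>f u - f v\<bar> \<le> real (comb_dist V P u v)"
          proof (intro ballI)
            fix u v assume "u \<in> V" "v \<in> V"
            have "\<bar>f u - f v\<bar> = \<bar>lev V P B u - lev V P B v\<bar>" unfolding f_def by (simp add: abs_minus_commute)
            thus "\<bar>f u - f v\<bar> \<le> real (comb_dist V P u v)" using lip \<open>u\<in>V\<close> \<open>v\<in>V\<close> by simp
          qed
          have ffx: "f x = 0" and ffy: "f y = 1" unfolding f_def using fx fy by auto
          define t where "t = 2 / d"
          have t0: "t \<ge> 0" unfolding t_def using d0 by simp
          have H: "laplacian V P (\<lambda>z. exp (t * f z)) x / exp (t * f x)
             \<ge> laplacian V P (\<lambda>z. exp (t * f z)) y / exp (t * f y)"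
            using conjunct1[OF R[rule_format, of f t, OF conjI[OF lipf conjI[OF _ t0]]]] ffx ffy by simp
          hence H': "(\<Sum>z\<in>V. P y z * exp (t * f z - t * f y))
              \<le> (\<Sum>z\<in>V. P x z * exp (t * f z - t * f x))"
            using lx[of "\<lambda>z. t * f z"] ly[of "\<lambda>z. t * f z"] by simp
          have low: "exp t * sum (P y) B \<le> (\<Sum>z\<in>V. P y z * exp (t * f z - t * f y))"
            by (rule sum_lower[OF fin BV]) (use P0 ffy in \<open>auto simp: f_def lev_def\<close>)
          have up: "(\<Sum>z\<in>V. P x z * exp (t * f z - t * f x)) \<le> exp t * sum (P x) NB + sum (P x) V"
          proof (rule sum_upper[OF fin NBV], intro ballI)
            fix z assume zV: "z \<in> V"
            show "P x z * exp (t * f z - t * f x) \<le> (if z \<in> NB then P x z * exp t else 0) + P x z"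
            proof (cases "P x z > 0")
              case False
              hence "P x z = 0" using P0[of x z] by linarith
              thus ?thesis by simp
            next
              case True
              have "comb_dist V P x z \<le> 1" using cd_supp[where P=P, OF xV zV True] .
              hence "comb_dist V P z x \<le> 1" using cd_sym1[OF ch con xV zV] by blast
              hence zB: "z \<notin> B" using hB by auto
              show ?thesis
              proof (cases "z \<in> NB")
                case True
                hence "f z = 1" unfolding f_def lev_def NB_def using zB by auto
                thus ?thesis using True ffx P0[of x z] by simp
              next
                case False
                hence "f z = 0" unfolding f_def lev_def NB_def using zB zV by auto
                thus ?thesis using False ffx by simp
              qed
            qed
          qed
          have "exp t * d \<le> 1" using low up H' Ps[OF xV] unfolding d_def by (simp add: algebra_simps)
          thus False using exp_contra[OF d0] unfolding t_def by simp
        qed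
      qed
    qed
  qed
qed

end
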